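(* Let $b \geq 2$ be an integer and let $a_1a_2a_3\ldots$ be an infinite de Bruijn word over the alphabet $\{0,1,\ldots,b-1\}$. Let $\alpha = 0.a_1a_2a_3\ldots$ be the real number with base-$b$ digits $a_1,a_2,\ldots$, i.e. $\alpha=\sum_{k\ge1}a_k b^{-k}$. Then the sequence $(\{b^n \alpha\})_{n \in \mathbb{N}}$ does not have Poissonian pair correlations.
   Context: $\{x\}$ denotes the fractional part of $x$ and $\|x\|$ the distance from $x$ to the nearest integer. A sequence $(x_n)_{n\in\mathbb{N}}$ in $[0,1)$ has Poissonian pair correlations if for every $s \geq 0$, $F_N(s) := \frac{1}{N}\#\{1 \leq l \neq m \leq N : \|x_l - x_m\| \leq s/N\} \to 2s$ as $N\to\infty$. A (non-cyclic) de Bruijn word of order $m$ over an alphabet $A$ is a word of length $|A|^m+m-1$ in which every word of length $m$ over $A$ occurs (as a factor of consecutive letters) exactly once. An infinite de Bruijn word $w=a_1a_2\ldots$ over an alphabet $A$ with at least three symbols is an infinite word such that for every $m$, $a_1\ldots a_{|A|^m+m-1}$ is a de Bruijn word of order $m$; if the alphabet has two symbols, it is an infinite word such that for every odd $m$, $a_1\ldots a_{|A|^m+m-1}$ is a de Bruijn word of order $m$. *)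

theory Defs
  imports "HOL-Analysis.Analysis"
begin

definition dist_int :: "real \<Rightarrow> real" where
  "dist_int x = \<bar>x - of_int (round x)\<bar>"

definition pair_corr :: "(nat \<Rightarrow> real) \<Rightarrow> nat \<Rightarrow> real \<Rightarrow> real" where
  "pair_corr x N s = real (card {(l, m). l \<in> {1..N} \<and> m \<in> {1..N} \<and> l \<noteq> m \<and>
       dist_int (x l - x m) \<le> s / real N}) / real N"

definition poissonian_pair_correlations :: "(nat \<Rightarrow> real) \<Rightarrow> bool" where
  "poissonian_pair_correlations x \<longleftrightarrow>
     (\<forall>s::real. s \<ge> 0 \<longrightarrow> ((\<lambda>N. pair_corr x N s) \<longlonglongrightarrow> 2 * s))"

text \<open>The word a_1 a_2 ... (letters a k for k >= 1) has prefix of length b^m+m-1 being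
  a de Bruijn word of order m over {0..b-1}: every word w of length m over the alphabet
  occurs exactly once as a factor, i.e. at exactly one start position i in {1..b^m}.\<close>
definition debruijn_prefix :: "nat \<Rightarrow> (nat \<Rightarrow> nat) \<Rightarrow> nat \<Rightarrow> bool" where
  "debruijn_prefix b a m \<longleftrightarrow>
     (\<forall>w. length w = m \<and> set w \<subseteq> {..<b} \<longrightarrow>
        (\<exists>!i. i \<in> {1..b ^ m} \<and> (\<forall>j<m. a (i + j) = w ! j)))"

definition infinite_debruijn :: "nat \<Rightarrow> (nat \<Rightarrow> nat) \<Rightarrow> bool" where
  "infinite_debruijn b a \<longleftrightarrow>
     (\<forall>k\<ge>1. a k < b) \<and>
     (if b \<ge> 3 then (\<forall>m. debruijn_prefix b a m)
      else (\<forall>m. odd m \<longrightarrow> debruijn_prefix b a m))"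

end

theory Submission
  imports Defs
begin


context
  fixes b :: nat and a :: "nat \<Rightarrow> nat"
  assumes b2: "b \<ge> 2" and dig: "\<forall>k\<ge>1. a k < b"
begin

definition T :: "nat \<Rightarrow> real" where
  "T l = (\<Sum>k. real (a (l + Suc k)) / real b ^ Suc k)"

lemma geo: "(\<lambda>k. (real b - 1) / real b ^ Suc k) sums 1"
proof -
  have b1: "real b > 1" using b2 by simp
  have "(\<lambda>k. (1 / real b) ^ k) sums (1 / (1 - 1 / real b))"
    by (rule geometric_sums) (use b1 in simp)
  then have "(\<lambda>k. (real b - 1) / real b * (1 / real b) ^ k) sums
      ((real b - 1) / real b * (1 / (1 - 1 / real b)))"
    by (rule sums_mult)
  moreover have "(real b - 1) / real b * (1 / (1 - 1 / real b)) = 1"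
    using b1 by (simp add: field_simps)
  moreover have "(\<lambda>k. (real b - 1) / real b * (1 / real b) ^ k) = (\<lambda>k. (real b - 1) / real b ^ Suc k)"
    by (simp add: power_divide)
  ultimately show ?thesis using b2 by simp
qed

lemma dle: "real (a (l + Suc k)) \<le> real b - 1"
proof -
  have "a (l + Suc k) < b" using dig by simp
  then show ?thesis by linarith
qed

lemma summ: "summable (\<lambda>k. real (a (l + Suc k)) / real b ^ Suc k)"
proof (rule summable_comparison_test')
  show "summable (\<lambda>k. (real b - 1) / real b ^ Suc k)" using geo sums_summable by blast
  fix k :: nat
  show "norm (real (a (l + Suc k)) / real b ^ Suc k) \<le> (real b - 1) / real b ^ Suc k"
    using dle[of l k] b2 by (simp add: divide_right_mono)
qed

lemma T_nonneg: "0 \<le> T l"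
  unfolding T_def by (rule suminf_nonneg[OF summ]) simp

lemma T_rec: "real b * T l = real (a (Suc l)) + T (Suc l)"
proof -
  have "(\<Sum>n. real (a (l + Suc (Suc n))) / real b ^ Suc (Suc n)) =
        T l - real (a (Suc l)) / real b"
    using suminf_split_head[OF summ[of l]] by (simp add: T_def)
  moreover have "(\<Sum>n. real (a (l + Suc (Suc n))) / real b ^ Suc (Suc n)) = T (Suc l) / real b"
    unfolding T_def
    by (subst suminf_divide[OF summ, symmetric]) (simp add: field_simps)
  ultimately show ?thesis using b2 by (simp add: field_simps)
qed

lemma T_lt1:
  assumes "a (l + Suc k0) = 0"
  shows "T l < 1"
proof -
  let ?f = "\<lambda>k. real (a (l + Suc k)) / real b ^ Suc k"
  let ?g = "\<lambda>k. (real b - 1) / real b ^ Suc k"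
  have s: "summable (\<lambda>k. ?g k - ?f k)"
    using summable_diff[OF sums_summable[OF geo] summ] by simp
  have "0 < (\<Sum>k. ?g k - ?f k)"
  proof (rule suminf_pos2[OF s])
    fix n show "0 \<le> ?g n - ?f n" using dle[of l n] b2 by (simp add: divide_right_mono)
    show "0 < ?g k0 - ?f k0" using assms b2 by simp
  qed
  also have "(\<Sum>k. ?g k - ?f k) = 1 - T l"
    using suminf_diff[OF sums_summable[OF geo] summ] sums_unique[OF geo] by (simp add: T_def)
  finally show ?thesis by simp
qed

lemma T_shift: "\<exists>c::int. real b ^ j * T l = of_int c + T (l + j)"
proof (induction j)
  case 0 then show ?case by (intro exI[of _ 0]) simp
next
  case (Suc j)
  then obtain c :: int where c: "real b ^ j * T l = of_int c + T (l + j)" by blast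
  have "real b ^ Suc j * T l = real b * (real b ^ j * T l)" by simp
  also have "\<dots> = real b * of_int c + real b * T (l + j)" using c by (simp add: algebra_simps)
  also have "\<dots> = of_int (int b * c + int (a (Suc (l + j)))) + T (l + Suc j)"
    using T_rec[of "l + j"] by simp
  finally show ?case by blast
qed


lemma digit_floor:
  assumes "0 \<le> T (Suc (l + j))" "T (Suc (l + j)) < 1"
  shows "\<lfloor>real b ^ Suc j * T l\<rfloor> mod int b = int (a (l + Suc j))"
proof -
  obtain c :: int where c: "real b ^ j * T l = of_int c + T (l + j)" using T_shift by blast
  have "real b ^ Suc j * T l = real b * (real b ^ j * T l)" by simp
  also have "\<dots> = of_int (int b * c + int (a (Suc (l + j)))) + T (Suc (l + j))"
    using c T_rec[of "l + j"] by (simp add: algebra_simps)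
  finally have e: "real b ^ Suc j * T l = of_int (int b * c + int (a (Suc (l + j)))) + T (Suc (l + j))" .
  have "\<lfloor>real b ^ Suc j * T l\<rfloor> = int b * c + int (a (Suc (l + j)))"
    unfolding e using assms by (intro floor_unique) auto
  moreover have "a (Suc (l + j)) < b" using dig by simp
  ultimately show ?thesis by simp
qed

lemma frac_T:
  assumes "T n < 1"
  shows "frac (real b ^ n * T 0) = T n"
proof -
  obtain c :: int where c: "real b ^ n * T 0 = of_int c + T (0 + n)" using T_shift by blast
  have "\<lfloor>real b ^ n * T 0\<rfloor> = c" unfolding c using assms T_nonneg[of n] by (intro floor_unique) auto
  then show ?thesis using c by (simp add: frac_def)
qed

end

lemma floor_div:
  fixes b :: nat and t :: real
  assumes "j < m"
  shows "\<lfloor>real b ^ Suc j * t\<rfloor> = \<lfloor>real b ^ m * t\<rfloor> div int (b ^ (m - Suc j))"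
proof -
  have "real b ^ m = real b ^ Suc j * real b ^ (m - Suc j)"
  proof -
    have "m = Suc j + (m - Suc j)" using assms by simp
    then have "real b ^ m = real b ^ (Suc j + (m - Suc j))" by simp
    then show ?thesis by (simp only: power_add)
  qed
  then have "real b ^ Suc j * t = real b ^ m * t / real_of_int (int (b ^ (m - Suc j)))"
    by (cases "b = 0") (auto simp: field_simps)
  then have "\<lfloor>real b ^ Suc j * t\<rfloor> = \<lfloor>real b ^ m * t / real_of_int (int (b ^ (m - Suc j)))\<rfloor>" by simp
  also have "\<lfloor>real b ^ m * t / real_of_int (int (b ^ (m - Suc j)))\<rfloor> = \<lfloor>real b ^ m * t\<rfloor> div int (b ^ (m - Suc j))"
    by (rule floor_divide_real_eq_div) simp
  finally show ?thesis .
qed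

lemma dist_int_ge:
  assumes "\<bar>z\<bar> < 1"
  shows "\<bar>z\<bar> \<le> dist_int z \<or> 1 - \<bar>z\<bar> \<le> dist_int z"
proof -
  define r where "r = round z"
  have d: "dist_int z = \<bar>z - of_int r\<bar>" by (simp add: dist_int_def r_def)
  consider "r = 0" | "r \<ge> 1" | "r \<le> -1" by linarith
  then show ?thesis
  proof cases
    case 1 then show ?thesis using d by simp
  next
    case 2 then have "real_of_int r \<ge> 1" by simp
    then show ?thesis using d assms by linarith
  next
    case 3 then have "real_of_int r \<le> -1" by simp
    then show ?thesis using d assms by linarith
  qed
qed



lemma nat_gt: "real n - 1 < real k \<Longrightarrow> n \<le> k"
proof -
  assume "real n - 1 < real k"
  then have "real n < real (k + 1)" by simp
  then have "n < k + 1" by (simp only: of_nat_less_iff)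
  then show ?thesis by simp
qed
lemma nat_lt1: "real k < 1 \<Longrightarrow> k = 0" by simp
lemma nat_adj:
  assumes "\<bar>real i - real j\<bar> < 2" "i \<noteq> j"
  shows "j = Suc i \<or> i = Suc j"
proof -
  have "real i < real (j + 2)" "real j < real (i + 2)" using assms(1) by (simp_all add: abs_less_iff)
  then have "i < j + 2" "j < i + 2" by (simp_all only: of_nat_less_iff)
  then show ?thesis using assms(2) by arith
qed

lemma pc_main:
  fixes x :: "nat \<Rightarrow> real" and N :: nat
  assumes N28: "N \<ge> 28" and xr: "\<And>l. l \<in> {1..N} \<Longrightarrow> 0 \<le> x l \<and> x l < 1"
    and inj: "inj_on (\<lambda>l. nat \<lfloor>real (Suc N) * x l\<rfloor>) {1..N}"
    and F1: "pair_corr x N (1/2) \<ge> 9/10" and F2: "pair_corr x N (7/8) \<ge> 17/10"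
  shows False
proof -
  define M where "M = Suc N"
  define kk where "kk l = nat \<lfloor>real M * x l\<rfloor>" for l
  have "kk = (\<lambda>l. nat \<lfloor>real (Suc N) * x l\<rfloor>)" by (simp add: kk_def M_def fun_eq_iff)
  then have injk: "inj_on kk {1..N}" using inj by simp
  have kkb: "real (kk l) \<le> real M * x l \<and> real M * x l < real (kk l) + 1 \<and> kk l < M"
    if l: "l \<in> {1..N}" for l
  proof -
    have x: "0 \<le> x l" "x l < 1" using xr[OF l] by auto
    have "0 \<le> real M * x l" using x by simp
    then have e: "real (kk l) = of_int \<lfloor>real M * x l\<rfloor>" by (simp add: kk_def)
    have "real M * x l < real M" using x by (simp add: M_def)
    then have "\<lfloor>real M * x l\<rfloor> < int M" by (simp add: floor_less_iff)
    then have "kk l < M" unfolding kk_def using M_def by linarith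
    then show ?thesis using e by linarith
  qed
  define y where "y k = (if \<exists>l\<in>{1..N}. kk l = k then x (THE l. l \<in> {1..N} \<and> kk l = k)
      else real k / real M)" for k
  have y_kk: "y (kk l) = x l" if l: "l \<in> {1..N}" for l
  proof -
    have "(THE l'. l' \<in> {1..N} \<and> kk l' = kk l) = l"
      using l injk by (intro the_equality) (auto dest: inj_onD)
    then show ?thesis using l by (auto simp: y_def)
  qed
  have Mpos: "real M > 0" by (simp add: M_def)
  have yb: "real k / real M \<le> y k \<and> y k < (real k + 1) / real M" if k: "k < M" for k
  proof (cases "\<exists>l\<in>{1..N}. kk l = k")
    case True
    then obtain l where l: "l \<in> {1..N}" "kk l = k" by blast
    then have "y k = x l" using y_kk by blast
    then show ?thesis using kkb[OF l(1)] l(2) Mpos by (simp add: field_simps)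
  next
    case False
    then show ?thesis using Mpos by (simp add: y_def field_simps)
  qed
  define g where "g k = real N * (y (Suc k) - y k)" for k
  have sum_g: "(\<Sum>k<N. g k) > real N - 2"
  proof -
    have "(\<Sum>k<N. g k) = real N * (\<Sum>k<N. y (Suc k) - y k)"
      by (simp add: g_def sum_distrib_left)
    also have "\<dots> = real N * (y N - y 0)" by (simp add: sum_lessThan_telescope)
    finally have e: "(\<Sum>k<N. g k) = real N * (y N - y 0)" .
    have "real N / real M \<le> y N" using yb[of N] by (simp add: M_def)
    moreover have "y 0 < 1 / real M" using yb[of 0] by (simp add: M_def)
    ultimately have "y N - y 0 > (real N - 1) / real M" using Mpos by (simp add: diff_divide_distrib)
    then have "real N * (y N - y 0) > real N * ((real N - 1) / real M)"
      using N28 by (intro mult_strict_left_mono) auto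
    moreover have "real N * ((real N - 1) / real M) \<ge> real N - 2"
      using N28 by (simp add: M_def field_simps)
    ultimately show ?thesis using e by linarith
  qed
  have g2: "g k \<le> 2" if "k < N" for k
  proof -
    have "y (Suc k) < (real k + 2) / real M" using yb[of "Suc k"] that by (simp add: M_def add.commute)
    moreover have "real k / real M \<le> y k" using yb[of k] that by (simp add: M_def)
    moreover have "(real k + 2) / real M - real k / real M = 2 / real M" by (simp add: add_divide_distrib)
    ultimately have "y (Suc k) - y k < 2 / real M" by linarith
    then have "g k \<le> real N * (2 / real M)" unfolding g_def
      by (intro mult_left_mono) auto
    also have "\<dots> \<le> 2" by (simp add: M_def field_simps)
    finally show ?thesis .
  qed
  define P where "P s = {(l, m). l \<in> {1..N} \<and> m \<in> {1..N} \<and> l \<noteq> m \<and>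
       dist_int (x l - x m) \<le> s / real N}" for s
  define B where "B s = {k. k < N \<and> g k \<le> s}" for s
  have pc: "pair_corr x N s = real (card (P s)) / real N" for s
    by (simp add: pair_corr_def P_def)
  have cardP: "real (card (P s)) \<le> 2 * real (card (B s)) + 2" if s: "0 \<le> s" "s \<le> 7/8" for s
  proof -
    define Q where "Q = (\<lambda>k. (k, Suc k)) ` B s \<union> (\<lambda>k. (Suc k, k)) ` B s \<union> {(N, 0), (0, N)}"
    define \<phi> where "\<phi> = (\<lambda>(l, m). (kk l, kk m))"
    have finB: "finite (B s)" by (simp add: B_def)
    have PS: "P s \<subseteq> {1..N} \<times> {1..N}" by (auto simp: P_def)
    have injP: "inj_on \<phi> (P s)"
      using injk PS unfolding inj_on_def \<phi>_def by auto
    have sN: "s / real N < 1 / real M"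
    proof -
      have "s * real M \<le> 7/8 * real M" using s by (intro mult_right_mono) auto
      moreover have "7/8 * real M < real N" using N28 by (simp add: M_def)
      ultimately have "s * real M < real N" by linarith
      then show ?thesis using N28 Mpos by (simp add: field_simps)
    qed
    have sub: "\<phi> ` P s \<subseteq> Q"
    proof
      fix p assume "p \<in> \<phi> ` P s"
      then obtain l m where lm: "(l, m) \<in> P s" and p: "p = (kk l, kk m)"
        by (auto simp: \<phi>_def)
      have l: "l \<in> {1..N}" and m: "m \<in> {1..N}" and lnm: "l \<noteq> m"
        and d: "dist_int (x l - x m) \<le> s / real N" using lm by (auto simp: P_def)
      have knk: "kk l \<noteq> kk m" using injk l m lnm by (auto dest: inj_onD)
      have xl: "0 \<le> x l" "x l < 1" and xm: "0 \<le> x m" "x m < 1" using xr l m by auto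
      have kl: "real (kk l) \<le> real M * x l" "real M * x l < real (kk l) + 1" "kk l < M"
        using kkb[OF l] by auto
      have km: "real (kk m) \<le> real M * x m" "real M * x m < real (kk m) + 1" "kk m < M"
        using kkb[OF m] by auto
      have "\<bar>x l - x m\<bar> < 1" using xl xm by linarith
      from dist_int_ge[OF this] d
      consider "\<bar>x l - x m\<bar> \<le> s / real N" | "1 - \<bar>x l - x m\<bar> \<le> s / real N" by (meson order_trans)
      then show "p \<in> Q"
      proof cases
        case 1
        then have "\<bar>x l - x m\<bar> < 1 / real M" using sN by linarith
        then have "real M * \<bar>x l - x m\<bar> < real M * (1 / real M)"
          using Mpos by (rule mult_strict_left_mono)
        moreover have "real M * (1 / real M) = 1" using Mpos by simp
        moreover have "\<bar>real M * x l - real M * x m\<bar> = real M * \<bar>x l - x m\<bar>"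
        proof -
          have "real M * x l - real M * x m = real M * (x l - x m)" by (simp add: algebra_simps)
          then show ?thesis by (simp add: abs_mult)
        qed
        ultimately have "\<bar>real M * x l - real M * x m\<bar> < 1" by linarith
        then have "\<bar>real (kk l) - real (kk m)\<bar> < 2" using kl km by linarith
        then have "kk m = Suc (kk l) \<or> kk l = Suc (kk m)" using knk by (rule nat_adj)
        then show ?thesis
        proof
          assume e: "kk m = Suc (kk l)"
          have "y (kk l) = x l" "y (Suc (kk l)) = x m" using y_kk[OF l] y_kk[OF m] e by auto
          then have "g (kk l) = real N * (x m - x l)" by (simp add: g_def)
          also have "\<dots> \<le> real N * (s / real N)" using 1 by (intro mult_left_mono) auto
          also have "\<dots> = s" using N28 by simp
          finally have "kk l \<in> B s" using e km(3) by (simp add: B_def M_def)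
          then show ?thesis using p e by (simp add: Q_def)
        next
          assume e: "kk l = Suc (kk m)"
          have "y (kk m) = x m" "y (Suc (kk m)) = x l" using y_kk[OF l] y_kk[OF m] e by auto
          then have "g (kk m) = real N * (x l - x m)" by (simp add: g_def)
          also have "\<dots> \<le> real N * (s / real N)" using 1 by (intro mult_left_mono) auto
          also have "\<dots> = s" using N28 by simp
          finally have "kk m \<in> B s" using e kl(3) by (simp add: B_def M_def)
          then show ?thesis using p e by (simp add: Q_def)
        qed
      next
        case 2
        then have w: "1 - \<bar>x l - x m\<bar> < 1 / real M" using sN by linarith
        have Mx: "real M * (1 / real M) = 1" using Mpos by simp
        show ?thesis
        proof (cases "x l \<ge> x m")
          case True
          then have "real M * x l > real M * (1 - 1 / real M)" "real M * x m < real M * (1 / real M)"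
            using w xl xm Mpos by (intro mult_strict_left_mono; linarith)+
          then have "real M * x l > real M - 1" "real M * x m < 1"
            using Mx by (simp_all add: right_diff_distrib)
          moreover have "real M = real N + 1" by (simp add: M_def)
          ultimately have "real (kk l) > real N - 1" "real (kk m) < 1" using kl km by linarith+
          then have "N \<le> kk l" "kk m = 0" by (auto intro: nat_gt nat_lt1)
          then have "kk l = N" "kk m = 0" using kl(3) by (simp_all add: M_def)
          then show ?thesis using p by (simp add: Q_def)
        next
          case False
          then have "real M * x m > real M * (1 - 1 / real M)" "real M * x l < real M * (1 / real M)"
            using w xl xm Mpos by (intro mult_strict_left_mono; linarith)+
          then have "real M * x m > real M - 1" "real M * x l < 1"
            using Mx by (simp_all add: right_diff_distrib)
          moreover have "real M = real N + 1" by (simp add: M_def)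
          ultimately have "real (kk m) > real N - 1" "real (kk l) < 1" using kl km by linarith+
          then have "N \<le> kk m" "kk l = 0" by (auto intro: nat_gt nat_lt1)
          then have "kk m = N" "kk l = 0" using km(3) by (simp_all add: M_def)
          then show ?thesis using p by (simp add: Q_def)
        qed
      qed
    qed
    have "card (P s) = card (\<phi> ` P s)" using card_image[OF injP] by simp
    also have "\<dots> \<le> card Q" using sub by (intro card_mono) (auto simp: Q_def finB)
    also have "card Q \<le> card (B s) + card (B s) + 2"
    proof -
      have "card Q \<le> card ((\<lambda>k. (k, Suc k)) ` B s \<union> (\<lambda>k. (Suc k, k)) ` B s) + card {(N, 0), (0, N)}"
        unfolding Q_def by (rule card_Un_le)
      also have "\<dots> \<le> card ((\<lambda>k. (k, Suc k)) ` B s) + card ((\<lambda>k. (Suc k, k)) ` B s) + 2"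
        by (intro add_mono card_Un_le) (auto simp: card_insert_if)
      also have "\<dots> \<le> card (B s) + card (B s) + 2"
        by (intro add_mono card_image_le finB) auto
      finally show ?thesis .
    qed
    finally show ?thesis by linarith
  qed
  have upper: "(\<Sum>k<N. g k) \<le> 2 * real N - 9/8 * real (card (B (7/8))) - 3/8 * real (card (B (1/2)))"
  proof -
    have pt: "g k \<le> 2 - 9/8 * (if g k \<le> 7/8 then 1 else 0) - 3/8 * (if g k \<le> 1/2 then 1 else 0)"
      if "k < N" for k
      using g2[OF that] by auto
    have cB: "(\<Sum>k<N. (if g k \<le> t then 1 else 0 :: real)) = real (card (B t))" for t
    proof -
      have "(\<Sum>k<N. (if g k \<le> t then 1 else 0 :: real)) = (\<Sum>k\<in>{k\<in>{..<N}. g k \<le> t}. 1)"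
        by (rule sum.inter_filter[symmetric]) simp
      also have "{k\<in>{..<N}. g k \<le> t} = B t" by (auto simp: B_def)
      finally show ?thesis by (simp only: sum_constant)
    qed
    have "(\<Sum>k<N. g k) \<le> (\<Sum>k<N. 2 - 9/8 * (if g k \<le> 7/8 then 1 else 0) - 3/8 * (if g k \<le> 1/2 then 1 else 0))"
      using pt by (intro sum_mono) auto
    also have "\<dots> = 2 * real N - 9/8 * (\<Sum>k<N. (if g k \<le> 7/8 then 1 else 0)) - 3/8 * (\<Sum>k<N. (if g k \<le> 1/2 then 1 else 0))"
      by (simp add: sum_subtractf sum_distrib_left)
    also have "\<dots> = 2 * real N - 9/8 * real (card (B (7/8))) - 3/8 * real (card (B (1/2)))"
      by (simp only: cB)
    finally show ?thesis .
  qed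
  have Npos: "real N > 0" using N28 by simp
  have c1: "real (card (P (1/2))) \<ge> 9/10 * real N" using F1 Npos by (simp add: pc field_simps)
  have c2: "real (card (P (7/8))) \<ge> 17/10 * real N" using F2 Npos by (simp add: pc field_simps)
  have b1: "real (card (P (1/2))) \<le> 2 * real (card (B (1/2))) + 2" by (rule cardP) auto
  have b2: "real (card (P (7/8))) \<le> 2 * real (card (B (7/8))) + 2" by (rule cardP) auto
  have "real N \<ge> 28" using N28 by simp
  then show False using sum_g upper c1 c2 b1 b2 by linarith
qed



theorem theorem2:
  fixes b :: nat and a :: "nat \<Rightarrow> nat"
  assumes "b \<ge> 2"
    and "infinite_debruijn b a"
  shows "\<not> poissonian_pair_correlations
           (\<lambda>n. frac (real b ^ n * (\<Sum>k. real (a (Suc k)) / real b ^ Suc k)))"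
proof
  assume pp: "poissonian_pair_correlations
           (\<lambda>n. frac (real b ^ n * (\<Sum>k. real (a (Suc k)) / real b ^ Suc k)))"
  have b2: "b \<ge> 2" by fact
  have dig: "\<forall>k\<ge>1. a k < b" using assms(2) by (simp add: infinite_debruijn_def)
  have db: "debruijn_prefix b a m" if "odd m" for m
    using assms(2) that by (auto simp: infinite_debruijn_def split: if_splits)
  have zero: "\<exists>k0. a (l + Suc k0) = 0" for l
  proof -
    define m where "m = 2 * l + 1"
    have "odd m" by (simp add: m_def)
    then have d: "debruijn_prefix b a m" by (rule db)
    have "length (replicate m (0::nat)) = m \<and> set (replicate m (0::nat)) \<subseteq> {..<b}"
      using b2 by auto
    then obtain i where i: "i \<in> {1..b ^ m}" "\<forall>j<m. a (i + j) = replicate m 0 ! j"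
      using d unfolding debruijn_prefix_def by blast
    have lt: "2 * l < m" by (simp add: m_def)
    have "a (i + 2 * l) = replicate m 0 ! (2 * l)" using i(2) lt by blast
    also have "\<dots> = 0" using lt by (rule nth_replicate)
    finally have "a (i + 2 * l) = 0" .
    moreover have "i + 2 * l = l + Suc (i + l - 1)" using i(1) by auto
    ultimately show ?thesis by metis
  qed
  have Tlt: "T b a l < 1" for l
    using zero[of l] T_lt1[OF b2 dig] by blast
  have Tge: "0 \<le> T b a l" for l using T_nonneg[OF b2 dig] .
  have xeq: "(\<lambda>n. frac (real b ^ n * (\<Sum>k. real (a (Suc k)) / real b ^ Suc k))) = T b a"
  proof
    fix n
    have "(\<Sum>k. real (a (Suc k)) / real b ^ Suc k) = T b a 0" unfolding T_def[OF b2 dig] by simp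
    then show "frac (real b ^ n * (\<Sum>k. real (a (Suc k)) / real b ^ Suc k)) = T b a n"
      using frac_T[OF b2 dig Tlt[of n]] by simp
  qed
  have pp': "poissonian_pair_correlations (T b a)" using pp xeq by simp
  then have l1: "(\<lambda>N. pair_corr (T b a) N (1/2)) \<longlonglongrightarrow> 1"
    and l2: "(\<lambda>N. pair_corr (T b a) N (7/8)) \<longlonglongrightarrow> 7/4"
  proof -
    have h: "\<And>s. s \<ge> 0 \<Longrightarrow> (\<lambda>N. pair_corr (T b a) N s) \<longlonglongrightarrow> 2 * s"
      using pp' unfolding poissonian_pair_correlations_def by blast
    show "(\<lambda>N. pair_corr (T b a) N (1/2)) \<longlonglongrightarrow> 1" using h[of "1/2"] by simp
    show "(\<lambda>N. pair_corr (T b a) N (7/8)) \<longlonglongrightarrow> 7/4" using h[of "7/8"] by simp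
  qed
  have "eventually (\<lambda>N. 9/10 < pair_corr (T b a) N (1/2)) sequentially"
    by (rule order_tendstoD(1)[OF l1]) simp
  moreover have "eventually (\<lambda>N. 17/10 < pair_corr (T b a) N (7/8)) sequentially"
    by (rule order_tendstoD(1)[OF l2]) simp
  ultimately have "eventually (\<lambda>N. 9/10 < pair_corr (T b a) N (1/2) \<and> 17/10 < pair_corr (T b a) N (7/8)) sequentially"
    by (rule eventually_conj)
  then obtain N0 where N0: "\<And>N. N \<ge> N0 \<Longrightarrow> 9/10 < pair_corr (T b a) N (1/2) \<and> 17/10 < pair_corr (T b a) N (7/8)"
    unfolding eventually_sequentially by blast
  define m where "m = 2 * (N0 + 28) + 1"
  define N where "N = b ^ m - 1"
  have "m < 2 ^ m" by (rule less_exp)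
  also have "(2::nat) ^ m \<le> b ^ m" using b2 by (rule power_mono) simp
  finally have bm: "m < b ^ m" .
  have NM: "Suc N = b ^ m" using bm by (simp add: N_def)
  have NN0: "N \<ge> N0" "N \<ge> 28" using bm by (auto simp: N_def m_def)
  have inj: "inj_on (\<lambda>l. nat \<lfloor>real (Suc N) * T b a l\<rfloor>) {1..N}"
  proof (rule inj_onI)
    fix l l' assume l: "l \<in> {1..N}" and l': "l' \<in> {1..N}"
      and e: "nat \<lfloor>real (Suc N) * T b a l\<rfloor> = nat \<lfloor>real (Suc N) * T b a l'\<rfloor>"
    have rS: "real (Suc N) = real b ^ m" using NM by (metis of_nat_power)
    have e2: "\<lfloor>real b ^ m * T b a l\<rfloor> = \<lfloor>real b ^ m * T b a l'\<rfloor>"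
    proof -
      have "0 \<le> real b ^ m * T b a l" "0 \<le> real b ^ m * T b a l'" using Tge by simp_all
      then show ?thesis using e rS by (simp add: eq_nat_nat_iff)
    qed
    have dg: "a (l + Suc j) = a (l' + Suc j)" if j: "j < m" for j
    proof -
      have "int (a (l + Suc j)) = \<lfloor>real b ^ Suc j * T b a l\<rfloor> mod int b"
        using digit_floor[OF b2 dig Tge Tlt] by simp
      also have "\<dots> = \<lfloor>real b ^ m * T b a l\<rfloor> div int (b ^ (m - Suc j)) mod int b"
        using floor_div[OF j] by simp
      also have "\<dots> = \<lfloor>real b ^ m * T b a l'\<rfloor> div int (b ^ (m - Suc j)) mod int b"
        using e2 by simp
      also have "\<dots> = \<lfloor>real b ^ Suc j * T b a l'\<rfloor> mod int b"
        using floor_div[OF j] by simp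
      also have "\<dots> = int (a (l' + Suc j))"
        using digit_floor[OF b2 dig Tge Tlt] by simp
      finally show ?thesis by simp
    qed
    define w where "w = map (\<lambda>j. a (l + Suc j)) [0..<m]"
    have wp: "length w = m \<and> set w \<subseteq> {..<b}" using dig by (auto simp: w_def)
    have "odd m" by (simp add: m_def)
    then have "\<exists>!i. i \<in> {1..b ^ m} \<and> (\<forall>j<m. a (i + j) = w ! j)"
      using db wp unfolding debruijn_prefix_def by blast
    moreover have "Suc l \<in> {1..b ^ m} \<and> (\<forall>j<m. a (Suc l + j) = w ! j)"
      using l NM by (auto simp: w_def)
    moreover have "Suc l' \<in> {1..b ^ m} \<and> (\<forall>j<m. a (Suc l' + j) = w ! j)"
      using l' NM dg by (auto simp: w_def)
    ultimately have "Suc l = Suc l'" by blast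
    then show "l = l'" by simp
  qed
  show False
  proof (rule pc_main[of N "T b a"])
    show "28 \<le> N" by (rule NN0(2))
    show "\<And>l. l \<in> {1..N} \<Longrightarrow> 0 \<le> T b a l \<and> T b a l < 1" using Tge Tlt by blast
    show "inj_on (\<lambda>l. nat \<lfloor>real (Suc N) * T b a l\<rfloor>) {1..N}" by (rule inj)
    show "9 / 10 \<le> pair_corr (T b a) N (1 / 2)" using N0[OF NN0(1)] by simp
    show "17 / 10 \<le> pair_corr (T b a) N (7 / 8)" using N0[OF NN0(1)] by simp
  qed
qed
end
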